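(* In the construction described in the context, for every $i\in\{1,\dots,t-1\}$ there exists a vertex $v_i\in V_{cc}$ with $v_i\in X_i$ and $v_i\notin X_j$ for all $j<i$. Moreover, there exists a vertex $u\in V_{cc}$ with $u\notin X_j$ for all $j\in\{1,\dots,t-1\}$.
   Context: Setting: $G=(V,E)$ is a connected finite undirected graph (parallel edges allowed), $w:E\to\mathbb{R}_{\ge0}$ edge weights, $c:E\to\mathbb{R}_{>0}$ edge costs, $n=|V|$. For $S\subseteq V$, $C_G(S)=\{e\in E:|e\cap S|=1\}$ (complete cut; its edges cross it) and $C_G(S,W)=\{e\in C_G(S):w(e)<W\}$ (partial cut). $F\subseteq E$ is a set with $G'=G\setminus F=(V,E\setminus F)$ connected; $B=c(F)$ and $\Delta=\mathrm{MST}(G')-\mathrm{MST}(G)$ (MST weights w.r.t. $w$). Construction: let $T$ be a minimum spanning tree of $G$ and $T\cap F=\{e_1,\dots,e_{t-1}\}$, with $t\ge2$. Removing these edges splits $T$ into components with vertex sets $A_1,\dots,A_t$ (a partition of $V$). Let $G'_{cc}$ be the multigraph with vertex set $V_{cc}=\{A_1,\dots,A_t\}$ having, for every edge $\{u,v\}\in E\setminus F$ with $u\in A_i$, $v\in A_j$, an edge between $A_i$ and $A_j$ of weight $w(\{u,v\})$ (identified with the original edge). Let $T'_{cc}$ be a minimum spanning tree of $G'_{cc}$, with edges $e'_1,\dots,e'_{t-1}$ indexed so that $w(e'_1)\le\dots\le w(e'_{t-1})$ (ties broken arbitrarily). For each $i$, deleting $e'_i,e'_{i+1},\dots,e'_{t-1}$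 from $T'_{cc}$ leaves a forest in which $e'_i$ joins two components $L_i,R_i\subseteq V_{cc}$. Counters $k(A)=0$ for all $A\in V_{cc}$ initially, and $k(S)=\max_{A\in S}k(A)$. For $i=1,\dots,t-1$ in order: set $X_i=L_i$ if $k(L_i)\le k(R_i)$, else $X_i=R_i$; then increase $k(A)$ by $1$ for every $A\in X_i$. Identifying a set of vertices of $G'_{cc}$ with the union of the corresponding vertex sets in $V$, define $C_i=C_G(X_i,w(e'_i))$. *)

theory Defs
  imports Complex_Main
begin

text \<open>Multigraphs: edges are abstract identifiers of type 'e, with an endpoint map
  ends :: 'e => 'v set (a loop has a singleton endpoint set).\<close>

definition adj :: "('e \<Rightarrow> 'v set) \<Rightarrow> 'e set \<Rightarrow> ('v \<times> 'v) set" where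
  "adj ends S = {(x, y). \<exists>e\<in>S. ends e = {x, y}}"

definition conn :: "'v set \<Rightarrow> ('e \<Rightarrow> 'v set) \<Rightarrow> 'e set \<Rightarrow> bool" where
  "conn V ends S \<longleftrightarrow> (\<forall>x\<in>V. \<forall>y\<in>V. (x, y) \<in> (adj ends S)\<^sup>*)"

definition forest :: "('e \<Rightarrow> 'v set) \<Rightarrow> 'e set \<Rightarrow> bool" where
  "forest ends S \<longleftrightarrow> (\<forall>e\<in>S. \<forall>x y. ends e = {x, y} \<longrightarrow> x \<noteq> y \<and> (x, y) \<notin> (adj ends (S - {e}))\<^sup>*)"

definition spanning_tree :: "'v set \<Rightarrow> 'e set \<Rightarrow> ('e \<Rightarrow> 'v set) \<Rightarrow> 'e set \<Rightarrow> bool" where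
  "spanning_tree V E ends T \<longleftrightarrow> T \<subseteq> E \<and> conn V ends T \<and> forest ends T"

definition is_MST :: "'v set \<Rightarrow> 'e set \<Rightarrow> ('e \<Rightarrow> 'v set) \<Rightarrow> ('e \<Rightarrow> real) \<Rightarrow> 'e set \<Rightarrow> bool" where
  "is_MST V E ends w T \<longleftrightarrow> spanning_tree V E ends T \<and>
     (\<forall>T'. spanning_tree V E ends T' \<longrightarrow> sum w T \<le> sum w T')"

definition comp :: "('e \<Rightarrow> 'v set) \<Rightarrow> 'e set \<Rightarrow> 'v \<Rightarrow> 'v set" where
  "comp ends S x = {y. (x, y) \<in> (adj ends S)\<^sup>*}"

definition components :: "'v set \<Rightarrow> ('e \<Rightarrow> 'v set) \<Rightarrow> 'e set \<Rightarrow> 'v set set" where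
  "components V ends S = comp ends S ` V"

text \<open>Endpoints of an edge in the contracted multigraph G'_cc (vertices = components).\<close>
definition ends_cc :: "'v set set \<Rightarrow> ('e \<Rightarrow> 'v set) \<Rightarrow> 'e \<Rightarrow> 'v set set" where
  "ends_cc Vcc ends e = {A \<in> Vcc. ends e \<inter> A \<noteq> {}}"

definition kmax :: "('a \<Rightarrow> nat) \<Rightarrow> 'a set \<Rightarrow> nat" where
  "kmax k S = Max (k ` S)"

definition pick :: "('a \<Rightarrow> nat) \<Rightarrow> 'a set \<Rightarrow> 'a set \<Rightarrow> 'a set" where
  "pick k Ls Rs = (if kmax k Ls \<le> kmax k Rs then Ls else Rs)"

primrec counters :: "(nat \<Rightarrow> 'a set) \<Rightarrow> (nat \<Rightarrow> 'a set) \<Rightarrow> nat \<Rightarrow> 'a \<Rightarrow> nat" where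
  "counters L R 0 = (\<lambda>A. 0)"
| "counters L R (Suc i) =
     (let X = pick (counters L R i) (L (Suc i)) (R (Suc i))
      in (\<lambda>A. counters L R i A + (if A \<in> X then 1 else 0)))"

text \<open>X_i for i >= 1.\<close>
definition Xset :: "(nat \<Rightarrow> 'a set) \<Rightarrow> (nat \<Rightarrow> 'a set) \<Rightarrow> nat \<Rightarrow> 'a set" where
  "Xset L R i = pick (counters L R (i - 1)) (L i) (R i)"

end

theory Submission
  imports Defs
begin

lemma adj_sym: "sym (adj ends S)"
  unfolding sym_def adj_def by (auto simp: insert_commute)

lemma rt_sym: "(x, y) \<in> (adj ends S)\<^sup>* \<Longrightarrow> (y, x) \<in> (adj ends S)\<^sup>*"
  using sym_rtrancl[OF adj_sym] by (meson symD)

lemma adj_mono: "S \<subseteq> S' \<Longrightarrow> (adj ends S)\<^sup>* \<subseteq> (adj ends S')\<^sup>*"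
  by (rule rtrancl_mono) (auto simp: adj_def)

lemma adj_edge: "e \<in> S \<Longrightarrow> ends e = {P, Q} \<Longrightarrow> (P, Q) \<in> (adj ends S)\<^sup>*"
  unfolding adj_def by blast

lemma comp_eq: "(x, a) \<in> (adj ends S)\<^sup>* \<Longrightarrow> comp ends S x = comp ends S a"
proof -
  assume xa: "(x, a) \<in> (adj ends S)\<^sup>*"
  then have ax: "(a, x) \<in> (adj ends S)\<^sup>*" by (rule rt_sym)
  show ?thesis
  proof (rule set_eqI)
    fix y
    show "y \<in> comp ends S x \<longleftrightarrow> y \<in> comp ends S a"
      unfolding comp_def using rtrancl_trans[OF xa, of y] rtrancl_trans[OF ax, of y] by auto
  qed
qed

lemma cnt_mono: "i \<le> m \<Longrightarrow> counters L R i B \<le> counters L R m B"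
proof (induction m rule: dec_induct)
  case base then show ?case by simp
next
  case (step m) then show ?case by (simp add: Let_def)
qed

lemma cnt_pos: "1 \<le> j \<Longrightarrow> B \<in> Xset L R j \<Longrightarrow> counters L R j B \<ge> 1"
  by (cases j) (auto simp: Xset_def Let_def)

lemma cnt_zero: "counters L R m B = 0 \<Longrightarrow> j \<in> {1..m} \<Longrightarrow> B \<notin> Xset L R j"
  using cnt_pos[of j B L R] cnt_mono[of j m L R B] by auto

lemma ends_cc_form:
  assumes "ends e \<subseteq> V" "card (ends e) = 2"
  shows "\<exists>a b. a \<in> V \<and> b \<in> V \<and>
    ends_cc (components V ends S) ends e = {comp ends S a, comp ends S b}"
proof -
  obtain a b where ab: "ends e = {a, b}" using assms(2) by (meson card_2_iff)
  have inV: "a \<in> V" "b \<in> V" using ab assms(1) by auto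
  have ca: "a \<in> comp ends S a" "b \<in> comp ends S b" by (auto simp: comp_def)
  have "ends_cc (components V ends S) ends e = {comp ends S a, comp ends S b}"
  proof
    show "ends_cc (components V ends S) ends e \<subseteq> {comp ends S a, comp ends S b}"
    proof
      fix A assume "A \<in> ends_cc (components V ends S) ends e"
      then obtain x where x: "A = comp ends S x" and "{a,b} \<inter> A \<noteq> {}"
        by (auto simp: ends_cc_def components_def ab)
      then have "a \<in> comp ends S x \<or> b \<in> comp ends S x" by auto
      then show "A \<in> {comp ends S a, comp ends S b}"
        using comp_eq[of x a ends S] comp_eq[of x b ends S] x by (auto simp: comp_def)
    qed
  next
    show "{comp ends S a, comp ends S b} \<subseteq> ends_cc (components V ends S) ends e"
      using ca inV by (auto simp: ends_cc_def components_def ab)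
  qed
  then show ?thesis using inV by blast
qed

lemma step_lemma:
  assumes r_sym: "\<And>x y. (x, y) \<in> r \<Longrightarrow> (y, x) \<in> r" and r_tr: "trans r"
    and rr': "r \<subseteq> r'" and r'_tr: "trans r'" and PQ: "(P, Q) \<in> r'" and nPQ: "(P, Q) \<notin> r"
    and X: "X = {y. (P, y) \<in> r}"
    and IH: "\<forall>A\<in>W. \<exists>B\<in>W. (A, B) \<in> r \<and> k B = 0" and PW: "P \<in> W" and QW: "Q \<in> W"
  shows "\<forall>A\<in>W. \<exists>B\<in>W. (A, B) \<in> r' \<and> k B = 0 \<and> B \<notin> X"
proof
  fix A assume A: "A \<in> W"
  obtain B where B: "B \<in> W" "(A, B) \<in> r" "k B = 0" using IH A by blast
  show "\<exists>B\<in>W. (A, B) \<in> r' \<and> k B = 0 \<and> B \<notin> X"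
  proof (cases "B \<in> X")
    case False then show ?thesis using B rr' by blast
  next
    case True
    then have "(P, B) \<in> r" using X by simp
    then have AP: "(A, P) \<in> r" using B r_sym r_tr by (meson transD)
    obtain B' where B': "B' \<in> W" "(Q, B') \<in> r" "k B' = 0" using IH QW by blast
    have "B' \<notin> X"
    proof
      assume "B' \<in> X"
      then have "(P, B') \<in> r" using X by simp
      then have "(P, Q) \<in> r" using B' r_sym r_tr by (meson transD)
      then show False using nPQ by simp
    qed
    moreover have "(A, B') \<in> r'" using AP PQ B'(2) rr' r'_tr by (meson subsetD transD)
    ultimately show ?thesis using B' by blast
  qed
qed

theorem mainTheorem11:
  fixes V :: "'v set" and E :: "'e set" and ends :: "'e \<Rightarrow> 'v set"
    and w :: "'e \<Rightarrow> real" and c :: "'e \<Rightarrow> real" and F :: "'e set"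
    and T :: "'e set" and t :: nat and Tcc :: "'e set"
    and e' :: "nat \<Rightarrow> 'e" and L R :: "nat \<Rightarrow> 'v set set"
  assumes finV: "finite V" and finE: "finite E"
    and ends_ok: "\<forall>e\<in>E. ends e \<subseteq> V \<and> card (ends e) = 2"
    and connG: "conn V ends E"
    and w_nonneg: "\<forall>e\<in>E. w e \<ge> 0" and c_pos: "\<forall>e\<in>E. c e > 0"
    and F_sub: "F \<subseteq> E" and connG': "conn V ends (E - F)"
    and T_MST: "is_MST V E ends w T"
    and t_ge: "t \<ge> 2" and TF_card: "card (T \<inter> F) = t - 1"
    and Tcc_MST: "is_MST (components V ends (T - F)) (E - F)
                    (ends_cc (components V ends (T - F)) ends) w Tcc"
    and e'_bij: "bij_betw e' {1..t-1} Tcc"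
    and e'_sorted: "\<forall>i j. 1 \<le> i \<longrightarrow> i \<le> j \<longrightarrow> j \<le> t - 1 \<longrightarrow> w (e' i) \<le> w (e' j)"
    and LR: "\<forall>i\<in>{1..t-1}. {L i, R i} =
               comp (ends_cc (components V ends (T - F)) ends) (e' ` {1..<i})
                 ` ends_cc (components V ends (T - F)) ends (e' i)"
  shows "(\<forall>i\<in>{1..t-1}. \<exists>v\<in>components V ends (T - F).
            v \<in> Xset L R i \<and> (\<forall>j\<in>{1..<i}. v \<notin> Xset L R j))
       \<and> (\<exists>u\<in>components V ends (T - F). \<forall>j\<in>{1..t-1}. u \<notin> Xset L R j)"
proof -
  define Vcc where "Vcc = components V ends (T - F)"
  define EC where "EC = ends_cc Vcc ends"
  define rel where "rel i = (adj EC (e' ` {1..<i}))\<^sup>*" for i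
  have relc: "comp EC (e' ` {1..<i}) P = {y. (P, y) \<in> rel i}" for i P
    by (simp add: comp_def rel_def)
  have ST: "spanning_tree Vcc (E - F) EC Tcc" using Tcc_MST by (simp add: is_MST_def Vcc_def EC_def)
  then have TccE: "Tcc \<subseteq> E - F" and fo: "forest EC Tcc" by (auto simp: spanning_tree_def)
  have G: "\<exists>P Q. P \<in> Vcc \<and> Q \<in> Vcc \<and> EC (e' i) = {P, Q} \<and> (P, Q) \<notin> rel i"
    if i: "i \<in> {1..t-1}" for i
  proof -
    have ei: "e' i \<in> Tcc" using e'_bij i by (meson bij_betwE)
    then have "e' i \<in> E" using TccE by blast
    then obtain a b where ab: "a \<in> V" "b \<in> V" "EC (e' i) = {comp ends (T - F) a, comp ends (T - F) b}"
      using ends_cc_form[of ends "e' i" V "T - F"] ends_ok by (auto simp: EC_def Vcc_def)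
    have PQ: "comp ends (T - F) a \<in> Vcc" "comp ends (T - F) b \<in> Vcc"
      using ab by (auto simp: Vcc_def components_def)
    have nr: "(comp ends (T - F) a, comp ends (T - F) b) \<notin> (adj EC (Tcc - {e' i}))\<^sup>*"
      using fo ei ab(3) unfolding forest_def by blast
    have sub: "e' ` {1..<i} \<subseteq> Tcc - {e' i}"
    proof
      fix x assume "x \<in> e' ` {1..<i}"
      then obtain j where j: "j \<in> {1..<i}" "x = e' j" by blast
      have "j \<in> {1..t-1}" using j i by auto
      then have "x \<in> Tcc" using e'_bij j by (meson bij_betwE)
      moreover have "x \<noteq> e' i"
        using e'_bij j i \<open>j \<in> {1..t-1}\<close> unfolding bij_betw_def inj_on_def by force
      ultimately show "x \<in> Tcc - {e' i}" by blast
    qed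
    have "(comp ends (T - F) a, comp ends (T - F) b) \<notin> rel i"
      using nr adj_mono[OF sub, of EC] unfolding rel_def by blast
    then show ?thesis using PQ ab(3) by blast
  qed
  have Inv: "m \<le> t - 1 \<Longrightarrow> \<forall>A\<in>Vcc. \<exists>B\<in>Vcc. (A, B) \<in> rel (Suc m) \<and> counters L R m B = 0" for m
  proof (induction m)
    case 0
    then show ?case by (auto simp: rel_def)
  next
    case (Suc m)
    define i where "i = Suc m"
    have i: "i \<in> {1..t-1}" using Suc.prems by (simp add: i_def)
    obtain P Q where PQ: "P \<in> Vcc" "Q \<in> Vcc" "EC (e' i) = {P, Q}" "(P, Q) \<notin> rel i"
      using G[OF i] by blast
    have IH: "\<forall>A\<in>Vcc. \<exists>B\<in>Vcc. (A, B) \<in> rel i \<and> counters L R m B = 0"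
      using Suc by (simp add: i_def)
    have LRi: "{L i, R i} = {{y. (P, y) \<in> rel i}, {y. (Q, y) \<in> rel i}}"
      using LR i PQ(3) relc unfolding EC_def Vcc_def by auto
    define X where "X = Xset L R i"
    have X: "X = L i \<or> X = R i" by (simp add: X_def Xset_def pick_def)
    have cS: "counters L R (Suc m) B = counters L R m B + (if B \<in> X then 1 else 0)" for B
      by (simp add: X_def Xset_def i_def Let_def)
    have rs: "\<And>x y. (x, y) \<in> rel i \<Longrightarrow> (y, x) \<in> rel i" by (simp add: rel_def rt_sym)
    have rt: "trans (rel i)" "trans (rel (Suc i))" by (simp_all add: rel_def trans_rtrancl)
    have rr: "rel i \<subseteq> rel (Suc i)" unfolding rel_def by (rule adj_mono) auto
    have e1: "(P, Q) \<in> rel (Suc i)" unfolding rel_def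
      by (rule adj_edge[of "e' i"]) (use PQ(3) i in auto)
    have e2: "(Q, P) \<in> rel (Suc i)" using e1 by (simp add: rel_def rt_sym)
    have n2: "(Q, P) \<notin> rel i" using PQ(4) rs by blast
    have "X = {y. (P, y) \<in> rel i} \<or> X = {y. (Q, y) \<in> rel i}" using X LRi by (metis doubleton_eq_iff)
    then have "\<forall>A\<in>Vcc. \<exists>B\<in>Vcc. (A, B) \<in> rel (Suc i) \<and> counters L R m B = 0 \<and> B \<notin> X"
    proof
      assume "X = {y. (P, y) \<in> rel i}"
      then show ?thesis using step_lemma[OF rs rt(1) rr rt(2) e1 PQ(4) _ IH PQ(1) PQ(2)] by blast
    next
      assume "X = {y. (Q, y) \<in> rel i}"
      then show ?thesis using step_lemma[OF rs rt(1) rr rt(2) e2 n2 _ IH PQ(2) PQ(1)] by blast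
    qed
    then show ?case using cS unfolding i_def by fastforce
  qed
  have P1: "\<exists>v\<in>Vcc. v \<in> Xset L R i \<and> (\<forall>j\<in>{1..<i}. v \<notin> Xset L R j)" if i: "i \<in> {1..t-1}" for i
  proof -
    obtain P Q where PQ: "P \<in> Vcc" "Q \<in> Vcc" "EC (e' i) = {P, Q}"
      using G[OF i] by blast
    have LRi: "{L i, R i} = {{y. (P, y) \<in> rel i}, {y. (Q, y) \<in> rel i}}"
      using LR i PQ(3) relc unfolding EC_def Vcc_def by auto
    have X: "Xset L R i = L i \<or> Xset L R i = R i" by (simp add: Xset_def pick_def)
    then have X2: "Xset L R i = {y. (P, y) \<in> rel i} \<or> Xset L R i = {y. (Q, y) \<in> rel i}"
      using LRi by (metis doubleton_eq_iff)
    have I: "\<forall>A\<in>Vcc. \<exists>B\<in>Vcc. (A, B) \<in> rel i \<and> counters L R (i - 1) B = 0"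
      using Inv[of "i - 1"] i by auto
    obtain B where B: "B \<in> Vcc" "B \<in> Xset L R i" "counters L R (i - 1) B = 0"
      using X2 I PQ(1,2) by blast
    have "\<forall>j\<in>{1..<i}. B \<notin> Xset L R j"
      using cnt_zero[OF B(3)] by auto
    then show ?thesis using B by blast
  qed
  have "1 \<in> {1..t-1}" using t_ge by auto
  then obtain P where PQ: "P \<in> Vcc" using G[of 1] by blast
  obtain B where B: "B \<in> Vcc" "counters L R (t - 1) B = 0" using Inv[of "t - 1"] PQ by blast
  have "\<forall>j\<in>{1..t-1}. B \<notin> Xset L R j" using cnt_zero[OF B(2)] by blast
  then show ?thesis using P1 B(1) unfolding Vcc_def by blast
qed

end
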